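(* There exists a (non-linear) kernel $g$ of dimension $16$ whose partial distance sequence is $(D_{min}^{(0)},\dots,D_{min}^{(15)})=(1,2,2,2,2,4,4,4,6,6,6,8,8,8,8,16)$; consequently $E_{16}\ge E(g)=\frac1{16}\sum_{i=0}^{15}\log_{16}D_{min}^{(i)}\approx0.52742$.
   Context: A kernel of dimension $\ell$ is a bijection $g:\{0,1\}^\ell\to\{0,1\}^\ell$. ${\bf a}\bullet{\bf b}$ denotes concatenation, $d_H$ Hamming distance. Partial distances: $D_{min}^{(i)}=\min\{d_H(g({\bf w}\bullet 0\bullet{\bf u}),g({\bf w}\bullet 1\bullet {\bf v})) : {\bf w}\in\{0,1\}^i,\ {\bf u},{\bf v}\in\{0,1\}^{\ell-i-1}\}$, $i=0,\dots,\ell-1$; exponent $E(g)=\frac1\ell\sum_{i=0}^{\ell-1}\log_\ell D_{min}^{(i)}$; $E_\ell=\max_g E(g)$ over all kernels of dimension $\ell$. *)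

theory Defs
  imports Complex_Main
begin

text \<open>Binary vectors of length l are modelled as bool lists of length l;
  concatenation is list append.\<close>

definition bvecs :: "nat \<Rightarrow> bool list set" where
  "bvecs l = {xs. length xs = l}"

definition hamming :: "bool list \<Rightarrow> bool list \<Rightarrow> nat" where
  "hamming xs ys = card {j. j < length xs \<and> xs ! j \<noteq> ys ! j}"

definition kernel :: "nat \<Rightarrow> (bool list \<Rightarrow> bool list) \<Rightarrow> bool" where
  "kernel l g \<longleftrightarrow> bij_betw g (bvecs l) (bvecs l)"

definition Dmin :: "nat \<Rightarrow> (bool list \<Rightarrow> bool list) \<Rightarrow> nat \<Rightarrow> nat" where
  "Dmin l g i = Min {hamming (g (w @ [False] @ u)) (g (w @ [True] @ v)) | w u v.
      w \<in> bvecs i \<and> u \<in> bvecs (l - i - 1) \<and> v \<in> bvecs (l - i - 1)}"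

definition exponent :: "nat \<Rightarrow> (bool list \<Rightarrow> bool list) \<Rightarrow> real" where
  "exponent l g = (1 / real l) * (\<Sum>i<l. log (real l) (real (Dmin l g i)))"

definition best_exponent :: "nat \<Rightarrow> real" where
  "best_exponent l = Max {exponent l g | g. kernel l g}"

definition linear_kernel :: "nat \<Rightarrow> (bool list \<Rightarrow> bool list) \<Rightarrow> bool" where
  "linear_kernel l g \<longleftrightarrow> (\<forall>x\<in>bvecs l. \<forall>y\<in>bvecs l.
      g (map2 (\<noteq>) x y) = map2 (\<noteq>) (g x) (g y))"

end

theory Submission imports Defs "HOL-Library.FuncSet" begin

definition vadd :: "int list \<Rightarrow> int list \<Rightarrow> int list" where "vadd u v = map2 (+) u v"
definition vsub :: "int list \<Rightarrow> int list \<Rightarrow> int list" where "vsub u v = map2 (-) u v"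
definition m4 :: "int list \<Rightarrow> int list" where "m4 v = map (\<lambda>a. a mod 4) v"
fun vm :: "int list \<Rightarrow> int list list \<Rightarrow> int list" where
  "vm (x#xs) (r#rs) = vadd (map ((*) x) r) (vm xs rs)"
| "vm _ _ = replicate 8 0"
definition lee :: "int \<Rightarrow> nat" where
  "lee x = (let y = x mod 4 in if y = 0 then 0 else if y = 2 then 2 else 1)"
definition lw :: "int list \<Rightarrow> nat" where "lw v = sum_list (map lee v)"
definition gray :: "int \<Rightarrow> bool list" where
  "gray x = (let y = x mod 4 in if y = 0 then [False,False] else if y = 1 then [False,True]
     else if y = 2 then [True,True] else [True,False])"

lemma hamming_conv: "length xs = length ys \<Longrightarrow>
   hamming xs ys = length (filter (\<lambda>(a,b). a \<noteq> b) (zip xs ys))"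
  unfolding hamming_def length_filter_conv_card by (auto intro!: arg_cong[where f=card])

lemma hamming_append: "length a = length c \<Longrightarrow> length b = length d \<Longrightarrow>
   hamming (a@b) (c@d) = hamming a c + hamming b d"
  by (simp add: hamming_conv)

lemma gray_len[simp]: "length (gray x) = 2" by (simp add: gray_def Let_def)

lemma lee_mod[simp]: "lee (a mod 4) = lee a" by (simp add: lee_def)

lemma gray_ham: "hamming (gray a) (gray b) = lee (a - b)"
proof -
  have e: "lee (a-b) = lee (a mod 4 - b mod 4)" unfolding lee_def by (simp add: mod_diff_eq)
  have g: "gray a = gray (a mod 4)" "gray b = gray (b mod 4)" unfolding gray_def by simp_all
  have "0 \<le> a mod 4" "a mod 4 < 4" "0 \<le> b mod 4" "b mod 4 < 4" by simp_all
  then have "a mod 4 = 0 \<or> a mod 4 = 1 \<or> a mod 4 = 2 \<or> a mod 4 = 3"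
      "b mod 4 = 0 \<or> b mod 4 = 1 \<or> b mod 4 = 2 \<or> b mod 4 = 3" by arith+
  then show ?thesis unfolding e g
    by (elim disjE) (simp_all add: hamming_conv gray_def lee_def)
qed

lemma len_concat_gray[simp]: "length (concat (map gray u)) = 2 * length u"
  by (induct u) auto

lemma ham_concat: "length u = length v \<Longrightarrow>
  hamming (concat (map gray u)) (concat (map gray v)) = lw (vsub u v)"
proof (induct u arbitrary: v)
  case Nil then show ?case by (simp add: hamming_def lw_def vsub_def)
next
  case (Cons a u)
  then obtain b v' where v: "v = b # v'" by (cases v) auto
  with Cons show ?case
    by (simp add: hamming_append gray_ham lw_def vsub_def)
qed


lemma len_vadd[simp]: "length (vadd u v) = min (length u) (length v)" by (simp add: vadd_def)
lemma len_vsub[simp]: "length (vsub u v) = min (length u) (length v)" by (simp add: vsub_def)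
lemma len_m4[simp]: "length (m4 u) = length u" by (simp add: m4_def)
lemma nth_vadd[simp]: "j < length u \<Longrightarrow> j < length v \<Longrightarrow> vadd u v ! j = u!j + v!j"
  by (simp add: vadd_def)
lemma nth_vsub[simp]: "j < length u \<Longrightarrow> j < length v \<Longrightarrow> vsub u v ! j = u!j - v!j"
  by (simp add: vsub_def)
lemma nth_m4[simp]: "j < length u \<Longrightarrow> m4 u ! j = u!j mod 4"
  by (simp add: m4_def)

definition rows8 :: "int list list \<Rightarrow> bool" where "rows8 M = (\<forall>r\<in>set M. length r = 8)"

lemma rows8_Cons[simp]: "rows8 (r#rs) = (length r = 8 \<and> rows8 rs)" by (simp add: rows8_def)
lemma rows8_Nil[simp]: "rows8 []" by (simp add: rows8_def)

lemma len_vm[simp]: "rows8 M \<Longrightarrow> length (vm d M) = 8"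
  by (induct d M rule: vm.induct) auto

lemma vm_zeros: "rows8 N \<Longrightarrow> vm (replicate n 0) N = replicate 8 0"
proof (induct n arbitrary: N)
  case 0 then show ?case by simp
next
  case (Suc n) then show ?case
    by (cases N) (auto intro!: nth_equalityI)
qed

lemma vm_add: "length a = length b \<Longrightarrow> rows8 N \<Longrightarrow>
   vm (vadd a b) N = vadd (vm a N) (vm b N)"
proof (induct a arbitrary: b N)
  case Nil then show ?case by (auto simp: vadd_def intro!: nth_equalityI)
next
  case (Cons x a)
  then obtain y b' where b: "b = y # b'" by (cases b) auto
  show ?case
  proof (cases N)
    case Nil then show ?thesis using b by (auto intro!: nth_equalityI)
  next
    case (Cons r rs)
    have vadd_cons: "vadd (x#a) (y#b') = (x+y) # vadd a b'" by (simp add: vadd_def)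
    have "vm (vadd a b') rs = vadd (vm a rs) (vm b' rs)"
      using Cons.hyps[of b' rs] Cons.prems b \<open>N = r # rs\<close> by simp
    then show ?thesis using b \<open>N = r # rs\<close> Cons.prems
      by (auto simp: vadd_cons algebra_simps intro!: nth_equalityI)
  qed
qed

lemma vm_smul: "rows8 N \<Longrightarrow> vm (map ((*) x) a) N = map ((*) x) (vm a N)"
proof (induct a arbitrary: N)
  case Nil then show ?case by (auto intro!: nth_equalityI)
next
  case (Cons y a)
  then show ?case by (cases N) (auto simp: algebra_simps intro!: nth_equalityI)
qed

lemma vm_sub: "length a = length b \<Longrightarrow> rows8 N \<Longrightarrow>
   vsub (vm a N) (vm b N) = vm (vsub a b) N"
proof (induct a arbitrary: b N)
  case Nil then show ?case by (auto simp: vsub_def intro!: nth_equalityI)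
next
  case (Cons x a)
  then obtain y b' where b: "b = y # b'" by (cases b) auto
  show ?case
  proof (cases N)
    case Nil then show ?thesis using b by (auto simp: vsub_def intro!: nth_equalityI)
  next
    case (Cons r rs)
    have vsub_cons: "vsub (x#a) (y#b') = (x-y) # vsub a b'" by (simp add: vsub_def)
    have "vm (vsub a b') rs = vsub (vm a rs) (vm b' rs)"
      using Cons.hyps[of b' rs] Cons.prems b \<open>N = r # rs\<close> by simp
    then show ?thesis using b \<open>N = r # rs\<close> Cons.prems
      by (auto simp: vsub_cons algebra_simps intro!: nth_equalityI)
  qed
qed

lemma vm_assoc: "rows8 M \<Longrightarrow> rows8 N \<Longrightarrow>
   vm (vm d M) N = vm d (map (\<lambda>r. vm r N) M)"
proof (induct d M rule: vm.induct)
  case (1 x xs r rs)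
  have "vm (vm (x # xs) (r # rs)) N = vadd (vm (map ((*) x) r) N) (vm (vm xs rs) N)"
    using 1 by (simp add: vm_add)
  also have "\<dots> = vadd (map ((*) x) (vm r N)) (vm xs (map (\<lambda>r. vm r N) rs))"
    using 1 by (simp add: vm_smul)
  finally show ?case by simp
next
  case ("2_1" M) then show ?case by (simp add: vm_zeros)
next
  case ("2_2" v) then show ?case by (simp add: vm_zeros)
qed

lemma m4_vadd: "m4 (vadd (m4 a) b) = m4 (vadd a b)"
  by (auto intro!: nth_equalityI simp: mod_add_left_eq)

lemma m4_vadd2: "m4 (vadd a (m4 b)) = m4 (vadd a b)"
  by (auto intro!: nth_equalityI simp: mod_add_right_eq)

lemma m4_smul: "m4 (map ((*) (x mod 4)) r) = m4 (map ((*) x) r)"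
  by (auto intro!: nth_equalityI simp: mod_mult_left_eq)

lemma m4_vm1: "m4 (vm (m4 d) M) = m4 (vm d M)"
proof (induct d M rule: vm.induct)
  case (1 x xs r rs)
  have "m4 (vm (m4 (x#xs)) (r#rs)) = m4 (vadd (map ((*) (x mod 4)) r) (vm (m4 xs) rs))"
    by (simp add: m4_def)
  also have "\<dots> = m4 (vadd (m4 (map ((*) (x mod 4)) r)) (m4 (vm (m4 xs) rs)))"
    by (simp add: m4_vadd m4_vadd2)
  also have "\<dots> = m4 (vadd (m4 (map ((*) x) r)) (m4 (vm xs rs)))"
    using 1 by (simp add: m4_smul)
  also have "\<dots> = m4 (vadd (map ((*) x) r) (vm xs rs))"
    by (simp add: m4_vadd m4_vadd2)
  finally show ?case by simp
qed (simp_all add: m4_def)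

lemma lw_m4[simp]: "lw (m4 v) = lw v"
  by (simp add: lw_def m4_def comp_def)


lemma m4_vm2: "m4 (vm d (map m4 M)) = m4 (vm d M)"
proof (induct d M rule: vm.induct)
  case (1 x xs r rs)
  have "m4 (vm (x#xs) (map m4 (r#rs))) = m4 (vadd (m4 (map ((*) x) (m4 r))) (m4 (vm xs (map m4 rs))))"
    by (simp add: m4_vadd m4_vadd2)
  also have "m4 (map ((*) x) (m4 r)) = m4 (map ((*) x) r)"
    by (auto intro!: nth_equalityI simp: mod_mult_right_eq m4_def)
  finally show ?case using 1 by (simp add: m4_vadd m4_vadd2)
qed (simp_all add: m4_def)

lemma vadd_assoc: "vadd (vadd a b) c = vadd a (vadd b c)"
  by (auto intro!: nth_equalityI simp: algebra_simps)

lemma vadd_zeros: "length a = 8 \<Longrightarrow> vadd a (replicate 8 0) = a"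
  by (auto intro!: nth_equalityI)

lemma vadd_zeros2: "length a = 8 \<Longrightarrow> vadd (replicate 8 0) a = a"
  by (auto intro!: nth_equalityI)

definition Bm :: "int list list" where
  "Bm = [[0, 2, 3, 1, 2, 0, 3, 0], [2, 0, 3, 1, 0, 1, 2, 1], [3, 3, 2, 2, 1, 1, 1, 1], [1, 1, 0, 3, 1, 3, 1, 2], [3, 0, 1, 3, 2, 3, 0, 0], [2, 3, 0, 3, 3, 1, 0, 0], [1, 3, 0, 1, 0, 2, 0, 1], [1, 3, 1, 3, 3, 3, 1, 1]]"
definition Cm :: "int list list" where
  "Cm = [[1, 0, 3, 1, 2, 1, 2, 1], [3, 2, 2, 0, 0, 3, 3, 1], [3, 1, 3, 2, 3, 1, 0, 0], [1, 3, 0, 0, 1, 1, 2, 3], [1, 3, 0, 1, 2, 0, 1, 2], [3, 0, 0, 3, 3, 3, 2, 0], [1, 0, 1, 0, 2, 2, 2, 1], [3, 3, 3, 1, 3, 3, 0, 1]]"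
definition I8 :: "int list list" where
  "I8 = [[1,0,0,0,0,0,0,0],[0,1,0,0,0,0,0,0],[0,0,1,0,0,0,0,0],[0,0,0,1,0,0,0,0],
         [0,0,0,0,1,0,0,0],[0,0,0,0,0,1,0,0],[0,0,0,0,0,0,1,0],[0,0,0,0,0,0,0,1]]"

lemma rep8: "replicate 8 (0::int) = [0,0,0,0,0,0,0,0]" by (simp add: numeral_eq_Suc)

lemma rows8_Bm: "rows8 Bm" by (simp add: Bm_def)
lemma rows8_Cm: "rows8 Cm" by (simp add: Cm_def)
lemma BC: "map m4 (map (\<lambda>r. vm r Cm) Bm) = I8"
  by (simp add: Bm_def Cm_def I8_def vadd_def m4_def rep8)

lemma vm_I8: "length d = 8 \<Longrightarrow> vm d I8 = d"
  by (simp add: numeral_eq_Suc length_Suc_conv, elim exE conjE) (simp add: I8_def vadd_def rep8)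

definition pp :: "nat \<Rightarrow> nat" where "pp k = (if k < 4 then k else k + 4)"
definition vbit :: "bool \<Rightarrow> bool \<Rightarrow> int" where "vbit a b = of_bool a + 2 * of_bool b"
definition coef :: "bool list \<Rightarrow> int list" where
  "coef xs = map (\<lambda>k. vbit (xs ! pp k) (xs ! (pp k + 4))) [0..<8]"
definition G :: "bool list \<Rightarrow> bool list" where
  "G xs = concat (map gray (vm (coef xs) Bm))"

lemma len_coef[simp]: "length (coef xs) = 8" by (simp add: coef_def)

lemma len_G: "length (G xs) = 16"
  using rows8_Bm by (simp add: G_def)

lemma ham_G: "hamming (G x) (G y) = lw (vm (m4 (vsub (coef x) (coef y))) Bm)"
proof -
  have "hamming (G x) (G y) = lw (vsub (vm (coef x) Bm) (vm (coef y) Bm))"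
    unfolding G_def using rows8_Bm by (simp add: ham_concat)
  also have "\<dots> = lw (vm (vsub (coef x) (coef y)) Bm)"
    using rows8_Bm by (simp add: vm_sub)
  also have "\<dots> = lw (m4 (vm (m4 (vsub (coef x) (coef y))) Bm))"
    by (simp only: m4_vm1 lw_m4)
  finally show ?thesis by simp
qed

fun chk :: "nat \<Rightarrow> int list \<Rightarrow> int list list \<Rightarrow> int list list \<Rightarrow> bool" where
  "chk L acc [] _ = (L \<le> lw acc)"
| "chk L acc (s#ss) (r#rs) = list_all (\<lambda>x. chk L (m4 (vadd acc (map ((*) x) r))) ss rs) s"
| "chk L acc (s#ss) [] = False"

lemma chk_sound: "chk L acc ss rs \<Longrightarrow> list_all2 (\<lambda>x s. x \<in> set s) d ss \<Longrightarrow> length acc = 8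
   \<Longrightarrow> rows8 rs \<Longrightarrow> L \<le> lw (vadd acc (vm d rs))"
proof (induct ss arbitrary: acc d rs)
  case Nil then show ?case by (simp add: vadd_zeros)
next
  case (Cons s ss)
  then obtain x d' where d: "d = x # d'" "x \<in> set s" "list_all2 (\<lambda>x s. x \<in> set s) d' ss"
    by (cases d) auto
  from Cons obtain r rs' where rs: "rs = r # rs'" by (cases rs) auto
  let ?acc = "m4 (vadd acc (map ((*) x) r))"
  have c: "chk L ?acc ss rs'" using Cons.prems d rs by (simp add: list_all_iff)
  have "L \<le> lw (vadd ?acc (vm d' rs'))"
    using Cons.hyps[OF c d(3)] Cons.prems rs by simp
  also have "lw (vadd ?acc (vm d' rs')) = lw (m4 (vadd (vadd acc (map ((*) x) r)) (vm d' rs')))"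
    by (metis m4_vadd lw_m4)
  also have "\<dots> = lw (vadd acc (vm d rs))" using d rs by (simp add: vadd_assoc)
  finally show ?case .
qed

definition cns :: "nat \<Rightarrow> nat \<Rightarrow> bool \<Rightarrow> bool \<Rightarrow> bool" where
  "cns i j a c = ((j < i \<longrightarrow> a = c) \<and> (j = i \<longrightarrow> \<not> a \<and> c))"
definition A :: "nat \<Rightarrow> nat \<Rightarrow> nat \<Rightarrow> int list" where
  "A i p q = remdups [(vbit a b - vbit c d) mod 4. a \<leftarrow> [False,True], b \<leftarrow> [False,True],
      c \<leftarrow> [False,True], d \<leftarrow> [False,True], cns i p a c \<and> cns i q b d]"
definition allowed :: "nat \<Rightarrow> int list list" where
  "allowed i = map (\<lambda>k. A i (pp k) (pp k + 4)) [0..<8]"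

lemma memA: "cns i p a c \<Longrightarrow> cns i q b d \<Longrightarrow> (vbit a b - vbit c d) mod 4 \<in> set (A i p q)"
  by (cases a; cases b; cases c; cases d) (auto simp: A_def)

lemma mem_allowed:
  assumes "length w = i" "length u = 15 - i" "length v = 15 - i" "i < 16"
  shows "list_all2 (\<lambda>x s. x \<in> set s) (m4 (vsub (coef (w@[False]@u)) (coef (w@[True]@v)))) (allowed i)"
proof -
  let ?x = "w@[False]@u" and ?y = "w@[True]@v"
  have c: "cns i j ((w @ False # u)!j) ((w @ True # v)!j)" for j
    using assms by (auto simp: cns_def nth_append)
  have pp: "k < 8 \<Longrightarrow> pp k + 4 < 16" for k by (simp add: pp_def)
  show ?thesis unfolding list_all2_conv_all_nth
    by (auto simp: allowed_def coef_def intro!: memA c)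
qed


definition smallL :: "int list list" where
  "smallL = replicate 8 0 # [(replicate 8 0)[j := c]. j \<leftarrow> [0..<8], c \<leftarrow> [1,3]]"

lemma lee0: "lee a = 0 \<longleftrightarrow> a mod 4 = 0" by (simp add: lee_def Let_def)
lemma lee1: "lee a = 1 \<Longrightarrow> a mod 4 = 1 \<or> a mod 4 = 3"
proof -
  assume "lee a = 1"
  moreover have "0 \<le> a mod 4" "a mod 4 < 4" by simp_all
  ultimately show ?thesis by (simp add: lee_def Let_def split: if_splits) arith
qed

lemma lw_nth: "lw z = (\<Sum>k<length z. lee (z!k))"
  by (simp add: lw_def sum_list_sum_nth atLeast0LessThan)

lemma small_lw: assumes "lw z \<le> 1" "length z = 8" shows "m4 z \<in> set smallL"
proof (cases "\<forall>k<8. lee (z!k) = 0")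
  case True
  then have "m4 z = replicate 8 0" using assms(2) by (auto intro!: nth_equalityI simp: lee0)
  then show ?thesis by (simp add: smallL_def)
next
  case False
  then obtain j where j: "j<8" "lee (z!j) \<noteq> 0" by auto
  have others: "lee (z!k) = 0" if "k<8" "k\<noteq>j" for k
  proof (rule ccontr)
    assume k: "lee (z!k) \<noteq> 0"
    have "lee (z!j) + lee (z!k) = (\<Sum>t\<in>{j,k}. lee (z!t))" using that by simp
    also have "\<dots> \<le> (\<Sum>t<length z. lee (z!t))"
      by (rule sum_mono2) (use that j assms(2) in auto)
    finally show False using assms k j by (simp add: lw_nth)
  qed
  have "lee (z!j) \<le> lw z" using j assms(2) unfolding lw_nth by (intro member_le_sum) auto
  then have "lee (z!j) = 1" using j assms by simp
  then have c: "z!j mod 4 = 1 \<or> z!j mod 4 = 3" by (rule lee1)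
  have "m4 z = (replicate 8 0)[j := z!j mod 4]" using others assms(2) j
    by (auto intro!: nth_equalityI simp: lee0 nth_list_update)
  then show ?thesis using c j by (auto simp: smallL_def)
qed

lemma allowed_m4: "list_all2 (\<lambda>x s. x \<in> set s) d (allowed i) \<Longrightarrow> m4 d = d"
proof -
  assume h: "list_all2 (\<lambda>x s. x \<in> set s) d (allowed i)"
  have r: "x \<in> set (A i p q) \<Longrightarrow> x mod 4 = x" for x p q
    by (auto simp: A_def)
  show ?thesis using h
    by (auto intro!: nth_equalityI r simp: list_all2_conv_all_nth allowed_def)
qed

lemma len_allowed[simp]: "length (allowed i) = 8" by (simp add: allowed_def)

lemma inv_d: "list_all2 (\<lambda>x s. x \<in> set s) d (allowed i) \<Longrightarrow> d = m4 (vm (m4 (vm d Bm)) Cm)"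
proof -
  assume h: "list_all2 (\<lambda>x s. x \<in> set s) d (allowed i)"
  then have l: "length d = 8" by (simp add: list_all2_lengthD)
  have "m4 (vm (m4 (vm d Bm)) Cm) = m4 (vm (vm d Bm) Cm)" by (rule m4_vm1)
  also have "\<dots> = m4 (vm d (map (\<lambda>r. vm r Cm) Bm))" using rows8_Bm rows8_Cm by (simp add: vm_assoc)
  also have "\<dots> = m4 (vm d (map m4 (map (\<lambda>r. vm r Cm) Bm)))" by (simp only: m4_vm2)
  also have "\<dots> = m4 d" by (simp only: BC vm_I8[OF l])
  also have "\<dots> = d" using h by (rule allowed_m4)
  finally show ?thesis by simp
qed

lemma LB_small: "list_all (\<lambda>z. \<not> list_all2 (\<lambda>x s. x \<in> set s) (m4 (vm z Cm)) (allowed i)) smallL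
  \<Longrightarrow> list_all2 (\<lambda>x s. x \<in> set s) d (allowed i) \<Longrightarrow> 2 \<le> lw (vm d Bm)"
proof (rule ccontr)
  assume c: "list_all (\<lambda>z. \<not> list_all2 (\<lambda>x s. x \<in> set s) (m4 (vm z Cm)) (allowed i)) smallL"
    and h: "list_all2 (\<lambda>x s. x \<in> set s) d (allowed i)" and n: "\<not> 2 \<le> lw (vm d Bm)"
  have "m4 (vm d Bm) \<in> set smallL" using n rows8_Bm by (intro small_lw) auto
  with c have "\<not> list_all2 (\<lambda>x s. x \<in> set s) (m4 (vm (m4 (vm d Bm)) Cm)) (allowed i)"
    by (simp add: list_all_iff)
  with h inv_d[OF h] show False by simp
qed

lemma LB_zero: "\<not> list_all2 (\<lambda>x s. x \<in> set s) (m4 (vm (replicate 8 0) Cm)) (allowed i)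
  \<Longrightarrow> list_all2 (\<lambda>x s. x \<in> set s) d (allowed i) \<Longrightarrow> 1 \<le> lw (vm d Bm)"
proof (rule ccontr)
  assume c: "\<not> list_all2 (\<lambda>x s. x \<in> set s) (m4 (vm (replicate 8 0) Cm)) (allowed i)"
    and h: "list_all2 (\<lambda>x s. x \<in> set s) d (allowed i)" and n: "\<not> 1 \<le> lw (vm d Bm)"
  have "lw (vm d Bm) = 0" using n by simp
  then have "\<forall>k<8. lee (vm d Bm ! k) = 0" using rows8_Bm unfolding lw_nth by simp
  then have "m4 (vm d Bm) = replicate 8 0" using rows8_Bm by (auto intro!: nth_equalityI simp: lee0)
  with c h inv_d[OF h] show False by simp
qed

definition Lv :: "nat list" where "Lv = [1,2,2,2,2,4,4,4,6,6,6,8,8,8,8,16]"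

lemma c0: "\<not> list_all2 (\<lambda>x s. x \<in> set s) (m4 (vm (replicate 8 0) Cm)) (allowed 0)" by code_simp
lemma c1: "list_all (\<lambda>z. \<not> list_all2 (\<lambda>x s. x \<in> set s) (m4 (vm z Cm)) (allowed 1)) smallL" by code_simp
lemma c2: "list_all (\<lambda>z. \<not> list_all2 (\<lambda>x s. x \<in> set s) (m4 (vm z Cm)) (allowed 2)) smallL" by code_simp
lemma c3: "list_all (\<lambda>z. \<not> list_all2 (\<lambda>x s. x \<in> set s) (m4 (vm z Cm)) (allowed 3)) smallL" by code_simp
lemma c4: "list_all (\<lambda>z. \<not> list_all2 (\<lambda>x s. x \<in> set s) (m4 (vm z Cm)) (allowed 4)) smallL" by code_simp

lemma k5: "chk (Lv!5) (replicate 8 0) (allowed 5) Bm" by code_simp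
lemma k6: "chk (Lv!6) (replicate 8 0) (allowed 6) Bm" by code_simp
lemma k7: "chk (Lv!7) (replicate 8 0) (allowed 7) Bm" by code_simp
lemma k8: "chk (Lv!8) (replicate 8 0) (allowed 8) Bm" by code_simp
lemma k9: "chk (Lv!9) (replicate 8 0) (allowed 9) Bm" by code_simp
lemma k10: "chk (Lv!10) (replicate 8 0) (allowed 10) Bm" by code_simp
lemma k11: "chk (Lv!11) (replicate 8 0) (allowed 11) Bm" by code_simp
lemma k12: "chk (Lv!12) (replicate 8 0) (allowed 12) Bm" by code_simp
lemma k13: "chk (Lv!13) (replicate 8 0) (allowed 13) Bm" by code_simp
lemma k14: "chk (Lv!14) (replicate 8 0) (allowed 14) Bm" by code_simp
lemma k15: "chk (Lv!15) (replicate 8 0) (allowed 15) Bm" by code_simp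
lemma LB: assumes "i < 16" and d: "list_all2 (\<lambda>x s. x \<in> set s) d (allowed i)" shows "Lv!i \<le> lw (vm d Bm)"
proof -
  have ch: "Lv!j \<le> lw (vm d Bm)" if "chk (Lv!j) (replicate 8 0) (allowed j) Bm" "j = i" for j
  proof -
    have "Lv!j \<le> lw (vadd (replicate 8 0) (vm d Bm))" using chk_sound[OF that(1)] d that(2) rows8_Bm by auto
    then show ?thesis using rows8_Bm by (simp add: vadd_zeros2)
  qed
  have "i = 0 \<or> i = 1 \<or> i = 2 \<or> i = 3 \<or> i = 4 \<or> i = 5 \<or> i = 6 \<or> i = 7 \<or> i = 8 \<or> i = 9 \<or> i = 10 \<or> i = 11 \<or> i = 12 \<or> i = 13 \<or> i = 14 \<or> i = 15"
    using assms by (simp add: less_Suc_eq numeral_eq_Suc)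
  then show ?thesis
  proof (elim disjE)
    assume "i = 0" then show ?thesis using LB_zero[OF c0, of d] d by (simp add: Lv_def)
  next
    assume "i = 1" then show ?thesis using LB_small[OF c1, of d] d by (simp add: Lv_def)
  next
    assume "i = 2" then show ?thesis using LB_small[OF c2, of d] d by (simp add: Lv_def)
  next
    assume "i = 3" then show ?thesis using LB_small[OF c3, of d] d by (simp add: Lv_def)
  next
    assume "i = 4" then show ?thesis using LB_small[OF c4, of d] d by (simp add: Lv_def)
  next
    assume "i = 5" then show ?thesis using ch[OF k5] by (simp add: Lv_def)
  next
    assume "i = 6" then show ?thesis using ch[OF k6] by (simp add: Lv_def)
  next
    assume "i = 7" then show ?thesis using ch[OF k7] by (simp add: Lv_def)
  next
    assume "i = 8" then show ?thesis using ch[OF k8] by (simp add: Lv_def)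
  next
    assume "i = 9" then show ?thesis using ch[OF k9] by (simp add: Lv_def)
  next
    assume "i = 10" then show ?thesis using ch[OF k10] by (simp add: Lv_def)
  next
    assume "i = 11" then show ?thesis using ch[OF k11] by (simp add: Lv_def)
  next
    assume "i = 12" then show ?thesis using ch[OF k12] by (simp add: Lv_def)
  next
    assume "i = 13" then show ?thesis using ch[OF k13] by (simp add: Lv_def)
  next
    assume "i = 14" then show ?thesis using ch[OF k14] by (simp add: Lv_def)
  next
    assume "i = 15" then show ?thesis using ch[OF k15] by (simp add: Lv_def)
  qed
qed

lemma LB_ham: assumes "i < 16" "length w = i" "length u = 15 - i" "length v = 15 - i"
  shows "Lv!i \<le> hamming (G (w@[False]@u)) (G (w@[True]@v))"
  unfolding ham_G using LB[OF assms(1) mem_allowed[OF assms(2-4) assms(1)]] by simp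

lemma witness: assumes "i < 16" shows "\<exists>w u v. length w = i \<and> length u = 15 - i \<and> length v = 15 - i \<and>
   hamming (G (w@[False]@u)) (G (w@[True]@v)) = Lv!i"
proof -
  have "i = 0 \<or> i = 1 \<or> i = 2 \<or> i = 3 \<or> i = 4 \<or> i = 5 \<or> i = 6 \<or> i = 7 \<or> i = 8 \<or> i = 9 \<or> i = 10 \<or> i = 11 \<or> i = 12 \<or> i = 13 \<or> i = 14 \<or> i = 15"
    using assms by (simp add: less_Suc_eq numeral_eq_Suc)
  then show ?thesis
  proof (elim disjE)
    assume "i = 0"
    show ?thesis unfolding ham_G \<open>i = 0\<close>
      by (rule exI[of _ "[]"], rule exI[of _ "[True, False, False, False, False, False, False, False, True, True, True, True, True, True, True]"], rule exI[of _ "[False, False, False, False, False, False, False, True, False, True, False, True, False, False, True]"], code_simp)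
  next
    assume "i = 1"
    show ?thesis unfolding ham_G \<open>i = 1\<close>
      by (rule exI[of _ "[False]"], rule exI[of _ "[True, True, False, False, False, True, True, True, False, True, True, True, True, True]"], rule exI[of _ "[False, False, True, False, False, False, True, True, False, True, False, True, False, True]"], code_simp)
  next
    assume "i = 2"
    show ?thesis unfolding ham_G \<open>i = 2\<close>
      by (rule exI[of _ "[False, False]"], rule exI[of _ "[False, True, True, False, True, False, False, True, False, False, False, True, True]"], rule exI[of _ "[True, False, False, True, True, True, True, False, False, False, False, True, False]"], code_simp)
  next
    assume "i = 3"
    show ?thesis unfolding ham_G \<open>i = 3\<close>
      by (rule exI[of _ "[False, False, False]"], rule exI[of _ "[True, True, True, False, True, True, True, True, False, True, False, False]"], rule exI[of _ "[False, True, False, True, True, True, True, False, True, True, False, True]"], code_simp)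
  next
    assume "i = 4"
    show ?thesis unfolding ham_G \<open>i = 4\<close>
      by (rule exI[of _ "[False, False, False, False]"], rule exI[of _ "[False, True, True, False, False, False, False, True, False, False, True]"], rule exI[of _ "[False, False, False, False, False, False, False, True, True, False, False]"], code_simp)
  next
    assume "i = 5"
    show ?thesis unfolding ham_G \<open>i = 5\<close>
      by (rule exI[of _ "[False, False, False, False, False]"], rule exI[of _ "[False, True, False, True, False, True, False, True, True, True]"], rule exI[of _ "[False, True, True, False, False, False, True, True, False, True]"], code_simp)
  next
    assume "i = 6"
    show ?thesis unfolding ham_G \<open>i = 6\<close>
      by (rule exI[of _ "[False, False, False, False, False, False]"], rule exI[of _ "[True, False, True, False, False, False, True, False, True]"], rule exI[of _ "[False, True, True, False, True, True, True, True, True]"], code_simp)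
  next
    assume "i = 7"
    show ?thesis unfolding ham_G \<open>i = 7\<close>
      by (rule exI[of _ "[False, False, False, False, False, False, False]"], rule exI[of _ "[False, False, False, False, False, False, False, False]"], rule exI[of _ "[False, False, False, False, False, False, False, True]"], code_simp)
  next
    assume "i = 8"
    show ?thesis unfolding ham_G \<open>i = 8\<close>
      by (rule exI[of _ "[False, False, False, False, False, False, False, False]"], rule exI[of _ "[False, False, False, False, False, False, False]"], rule exI[of _ "[False, False, False, False, False, False, False]"], code_simp)
  next
    assume "i = 9"
    show ?thesis unfolding ham_G \<open>i = 9\<close>
      by (rule exI[of _ "[False, False, False, False, False, False, False, False, False]"], rule exI[of _ "[False, False, False, False, False, False]"], rule exI[of _ "[False, False, False, False, False, False]"], code_simp)
  next
    assume "i = 10"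
    show ?thesis unfolding ham_G \<open>i = 10\<close>
      by (rule exI[of _ "[False, False, False, False, False, False, False, False, False, False]"], rule exI[of _ "[False, False, False, False, False]"], rule exI[of _ "[False, False, False, False, False]"], code_simp)
  next
    assume "i = 11"
    show ?thesis unfolding ham_G \<open>i = 11\<close>
      by (rule exI[of _ "[False, False, False, False, False, False, False, False, False, False, False]"], rule exI[of _ "[False, False, False, False]"], rule exI[of _ "[False, False, False, False]"], code_simp)
  next
    assume "i = 12"
    show ?thesis unfolding ham_G \<open>i = 12\<close>
      by (rule exI[of _ "[False, False, False, False, False, False, False, False, False, False, False, False]"], rule exI[of _ "[False, False, False]"], rule exI[of _ "[False, False, False]"], code_simp)
  next
    assume "i = 13"
    show ?thesis unfolding ham_G \<open>i = 13\<close>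
      by (rule exI[of _ "[False, False, False, False, False, False, False, False, False, False, False, False, False]"], rule exI[of _ "[False, False]"], rule exI[of _ "[False, False]"], code_simp)
  next
    assume "i = 14"
    show ?thesis unfolding ham_G \<open>i = 14\<close>
      by (rule exI[of _ "[False, False, False, False, False, False, False, False, False, False, False, False, False, False]"], rule exI[of _ "[False]"], rule exI[of _ "[False]"], code_simp)
  next
    assume "i = 15"
    show ?thesis unfolding ham_G \<open>i = 15\<close>
      by (rule exI[of _ "[False, False, False, False, False, False, False, False, False, False, False, False, False, False, False]"], rule exI[of _ "[]"], rule exI[of _ "[]"], code_simp)
  qed
qed

lemma hamming_le: "hamming xs ys \<le> length xs"
proof -
  have "hamming xs ys \<le> card {..<length xs}" unfolding hamming_def by (rule card_mono) auto
  then show ?thesis by simp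
qed

lemma hamming_self[simp]: "hamming xs xs = 0" by (simp add: hamming_def)

lemma Dmin_G: assumes "i < 16" shows "Dmin 16 G i = Lv!i"
proof -
  let ?S = "{hamming (G (w @ [False] @ u)) (G (w @ [True] @ v)) | w u v.
      w \<in> bvecs i \<and> u \<in> bvecs (16 - i - 1) \<and> v \<in> bvecs (16 - i - 1)}"
  have fin: "finite ?S"
    by (rule finite_subset[of _ "{..16}"]) (auto intro: order.trans[OF hamming_le] simp: len_G)
  have lb: "\<forall>y\<in>?S. Lv!i \<le> y" using LB_ham[OF assms] by (auto simp: bvecs_def)
  obtain w u v where "length w = i" "length u = 15 - i" "length v = 15 - i"
    "hamming (G (w@[False]@u)) (G (w@[True]@v)) = Lv!i" using witness[OF assms] by blast
  then have mem: "Lv!i \<in> ?S" unfolding bvecs_def by force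
  show ?thesis unfolding Dmin_def by (rule Min_eqI[OF fin]) (use lb mem in auto)
qed

lemma Lv_pos: "i < 16 \<Longrightarrow> 1 \<le> Lv!i"
proof -
  assume "i < 16"
  then have "Lv!i \<in> set Lv" by (intro nth_mem) (simp add: Lv_def)
  moreover have "\<forall>x\<in>set Lv. 1 \<le> x" by (simp add: Lv_def)
  ultimately show ?thesis by blast
qed

lemma split_diff: "length x = length y \<Longrightarrow> x \<noteq> y \<Longrightarrow>
   \<exists>w a u v. x = w @ [a] @ u \<and> y = w @ [\<not>a] @ v \<and> length u = length v"
proof (induct x arbitrary: y)
  case Nil then show ?case by simp
next
  case (Cons b x)
  then obtain c y' where y: "y = c # y'" by (cases y) auto
  show ?case
  proof (cases "b = c")
    case True
    then have "x \<noteq> y'" "length x = length y'" using Cons.prems y by auto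
    then obtain w a u v where "x = w @ [a] @ u" "y' = w @ [\<not>a] @ v" "length u = length v"
      using Cons.hyps by blast
    then show ?thesis using y True by (intro exI[of _ "b # w"]) auto
  next
    case False
    then show ?thesis using y Cons.prems by (intro exI[of _ "[]"]) auto
  qed
qed

lemma G_inj: "inj_on G (bvecs 16)"
proof (rule inj_onI, rule ccontr)
  fix x y assume x: "x \<in> bvecs 16" and y: "y \<in> bvecs 16" and e: "G x = G y" and ne: "x \<noteq> y"
  then obtain w a u v where d: "x = w @ [a] @ u" "y = w @ [\<not>a] @ v" "length u = length v"
    using split_diff[of x y] by (auto simp: bvecs_def)
  let ?i = "length w"
  have l: "?i < 16" "length u = 15 - ?i" "length v = 15 - ?i" using x d by (auto simp: bvecs_def)
  show False
  proof (cases a)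
    case False
    have "Lv!?i \<le> hamming (G x) (G y)" using LB_ham[OF l(1) refl l(2,3)] d False by simp
    then show False using e Lv_pos[OF l(1)] by simp
  next
    case True
    have "Lv!?i \<le> hamming (G y) (G x)" using LB_ham[OF l(1) refl l(3,2)] d True by simp
    then show False using e Lv_pos[OF l(1)] by simp
  qed
qed

lemma fin_bvecs: "finite (bvecs n)"
proof -
  have "bvecs n = {xs. set xs \<subseteq> (UNIV::bool set) \<and> length xs = n}" by (auto simp: bvecs_def)
  then show ?thesis using finite_lists_length_eq[of "UNIV::bool set" n] by simp
qed

lemma G_kernel: "kernel 16 G"
proof -
  have sub: "G ` bvecs 16 \<subseteq> bvecs 16" by (auto simp: bvecs_def len_G)
  have "G ` bvecs 16 = bvecs 16" by (rule endo_inj_surj[OF fin_bvecs sub G_inj])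
  then show ?thesis unfolding kernel_def bij_betw_def using G_inj by simp
qed

lemma G_nonlin: "\<not> linear_kernel 16 G"
proof -
  let ?x = "[False, False, True, False, True, False, True, False, True, True, True, False, False, False, False, True]"
  let ?y = "[False, False, False, True, True, False, False, False, True, False, False, True, False, False, True, True]"
  have "G (map2 (\<noteq>) ?x ?y) \<noteq> map2 (\<noteq>) (G ?x) (G ?y)" by code_simp
  moreover have "?x \<in> bvecs 16" "?y \<in> bvecs 16" by (simp_all add: bvecs_def)
  ultimately show ?thesis unfolding linear_kernel_def by blast
qed

lemma map_Dmin: "map (Dmin 16 G) [0..<16] = [1,2,2,2,2,4,4,4,6,6,6,8,8,8,8,16]"
proof -
  have "map (Dmin 16 G) [0..<16] = map (\<lambda>i. Lv!i) [0..<16]" by (simp add: Dmin_G)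
  also have "\<dots> = Lv" by (rule nth_equalityI) (simp_all add: Lv_def)
  finally show ?thesis by (simp add: Lv_def)
qed


lemma upt16: "[0..<16] = [0,1,2,3,4,5,6,7,8,9,10,11,12,13,14,15::nat]" by (simp add: upt_rec)
lemma mapLv: "map (\<lambda>i. real (Lv!i)) [0..<16] = [1,2,2,2,2,4,4,4,6,6,6,8,8,8,8,16]"
  unfolding upt16 by (simp add: Lv_def)
lemma sumLv: "(\<Sum>i<16. log 16 (real (Lv!i))) = (29 * ln 2 + 3 * ln 3) / (4 * ln 2)"
proof -
  have "(\<Sum>i<16. log 16 (real (Lv!i))) = sum_list (map (log 16) (map (\<lambda>i. real (Lv!i)) [0..<16]))"
    by (simp only: atLeast0LessThan[symmetric] atLeastLessThan_upt sum_set_upt_conv_sum_list_nat map_map comp_def)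
  also have "\<dots> = (ln 1 + ln 2 + ln 2 + ln 2 + ln 2 + ln 4 + ln 4 + ln 4 + ln 6 + ln 6 + ln 6 + ln 8 + ln 8 + ln 8 + ln 8 + ln 16) / ln 16"
    unfolding mapLv by (simp only: list.map sum_list.Cons sum_list.Nil log_def add_divide_distrib add_0_right add.assoc)
  also have "ln (4::real) = 2 * ln 2" using ln_realpow[of 2 2] by simp
  also have "ln (8::real) = 3 * ln 2" using ln_realpow[of 2 3] by simp
  also have "ln (6::real) = ln 2 + ln 3" using ln_mult[of 2 3] by simp
  also have "ln (16::real) = 4 * ln 2" using ln_realpow[of 2 4] by simp
  finally show ?thesis by simp
qed
lemma b1n: "(2::nat)^1054 < 3^665" by simp
lemma b2n: "(3::nat)^306 < 2^485" by simp
lemma b1: "(2::real)^1054 < 3^665"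
proof -
  have "real ((2::nat)^1054) < real ((3::nat)^665)" using b1n by (simp only: of_nat_less_iff)
  then show ?thesis unfolding of_nat_power of_nat_numeral .
qed
lemma b2: "(3::real)^306 < 2^485"
proof -
  have "real ((3::nat)^306) < real ((2::nat)^485)" using b2n by (simp only: of_nat_less_iff)
  then show ?thesis unfolding of_nat_power of_nat_numeral .
qed
lemma p2: "(0::real) < 2^n" "(0::real) < 3^n" for n :: nat by simp_all
lemma val_bound: "\<bar>(1/16) * (\<Sum>i<16. log 16 (real (Lv!i))) - 0.52742\<bar> < (0.000005::real)"
proof -
  have l2: "ln (2::real) > 0" by simp
  have x1: "ln ((2::real)^1054) < ln (3^665)"
    apply (subst ln_less_cancel_iff) apply (rule p2) apply (rule p2) by (rule b1)
  have x2: "ln ((3::real)^306) < ln (2^485)"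
    apply (subst ln_less_cancel_iff) apply (rule p2) apply (rule p2) by (rule b2)
  have a1: "ln ((2::real)^1054) = 1054 * ln 2" by (subst ln_realpow) simp_all
  have a2: "ln ((3::real)^665) = 665 * ln 3" by (subst ln_realpow) simp_all
  have a3: "ln ((3::real)^306) = 306 * ln 3" by (subst ln_realpow) simp_all
  have a4: "ln ((2::real)^485) = 485 * ln 2" by (subst ln_realpow) simp_all
  have lo: "1054 * ln 2 < 665 * ln (3::real)" using x1 unfolding a1 a2 .
  have hi: "306 * ln 3 < 485 * ln (2::real)" using x2 unfolding a3 a4 .
  have l16: "ln (16::real) = 4 * ln 2" using ln_realpow[of 2 4] by simp
  define q where "q = ln 3 / ln (2::real)"
  have e: "(1/16) * (\<Sum>i<16. log 16 (real (Lv!i))) = 29/64 + 3/64 * q"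
    unfolding sumLv q_def using l2 by (simp add: field_simps)
  have "q > 1054/665" unfolding q_def using lo l2 by (simp add: field_simps)
  moreover have "q < 485/306" unfolding q_def using hi l2 by (simp add: field_simps)
  ultimately show ?thesis unfolding e by (simp add: abs_less_iff)
qed

lemma Dmin_le16: assumes k: "kernel 16 h" and i: "i < 16" shows "Dmin 16 h i \<le> 16"
proof -
  let ?S = "{hamming (h (w @ [False] @ u)) (h (w @ [True] @ v)) | w u v.
      w \<in> bvecs i \<and> u \<in> bvecs (16 - i - 1) \<and> v \<in> bvecs (16 - i - 1)}"
  have len: "length (h x) = 16" if "length x = 16" for x
    using k that unfolding kernel_def bij_betw_def bvecs_def by auto
  have sub: "?S \<subseteq> {..16}"
  proof
    fix y assume "y \<in> ?S"
    then obtain w u v where "y = hamming (h (w @ [False] @ u)) (h (w @ [True] @ v))"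
      "w \<in> bvecs i" "u \<in> bvecs (16 - i - 1)"  by blast
    then show "y \<in> {..16}" using i len[of "w @ [False] @ u"] hamming_le[of "h (w @ [False] @ u)"]
      by (auto simp: bvecs_def)
  qed
  have fin: "finite ?S" using sub finite_subset by blast
  let ?e = "hamming (h (replicate i False @ [False] @ replicate (15 - i) False))
                    (h (replicate i False @ [True] @ replicate (15 - i) False))"
  have mem: "?e \<in> ?S" using i unfolding bvecs_def by force
  have "Dmin 16 h i \<le> ?e" unfolding Dmin_def by (rule Min_le[OF fin mem])
  also have "?e \<le> 16" using sub mem by auto
  finally show ?thesis .
qed

lemma exp_fin: "finite {exponent 16 g | g. kernel 16 g}"
proof -
  let ?F = "\<lambda>D::nat \<Rightarrow> nat. (1 / real 16) * (\<Sum>i<(16::nat). log (real 16) (real (D i)))"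
  have "{exponent 16 g | g. kernel 16 g} \<subseteq> ?F ` (PiE {..<16::nat} (\<lambda>_. {..16::nat}))"
  proof
    fix x assume "x \<in> {exponent 16 g | g. kernel 16 g}"
    then obtain h where h: "kernel 16 h" "x = exponent 16 h" by blast
    have "x = ?F (restrict (Dmin 16 h) {..<16::nat})" unfolding h(2) exponent_def
      by (intro arg_cong[where f="\<lambda>t. (1 / real 16) * t"] sum.cong) auto
    moreover have "restrict (Dmin 16 h) {..<16::nat} \<in> PiE {..<16::nat} (\<lambda>_. {..16::nat})"
      using Dmin_le16[OF h(1)] by (auto simp: restrict_PiE_iff)
    ultimately show "x \<in> ?F ` (PiE {..<16::nat} (\<lambda>_. {..16::nat}))" by blast
  qed
  moreover have "finite (?F ` (PiE {..<16::nat} (\<lambda>_. {..16::nat})))"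
    by (intro finite_imageI finite_PiE) auto
  ultimately show ?thesis using finite_subset by blast
qed

theorem mainTheorem11:
  shows "\<exists>g. kernel 16 g \<and> \<not> linear_kernel 16 g
     \<and> map (Dmin 16 g) [0..<16] = [1,2,2,2,2,4,4,4,6,6,6,8,8,8,8,16]
     \<and> exponent 16 g = (1/16) * (\<Sum>i<16. log 16 (real (Dmin 16 g i)))
     \<and> exponent 16 g \<le> best_exponent 16
     \<and> \<bar>exponent 16 g - 0.52742\<bar> < 0.000005"
proof (intro exI[of _ G] conjI)
  show "kernel 16 G" by (rule G_kernel)
  show "\<not> linear_kernel 16 G" by (rule G_nonlin)
  show "map (Dmin 16 G) [0..<16] = [1,2,2,2,2,4,4,4,6,6,6,8,8,8,8,16]" by (rule map_Dmin)
  show e: "exponent 16 G = (1/16) * (\<Sum>i<16. log 16 (real (Dmin 16 G i)))"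
    by (simp add: exponent_def)
  show "exponent 16 G \<le> best_exponent 16" unfolding best_exponent_def
    by (rule Max_ge[OF exp_fin]) (use G_kernel in blast)
  have "(\<Sum>i<16. log 16 (real (Dmin 16 G i))) = (\<Sum>i<16. log 16 (real (Lv!i)))"
    by (intro sum.cong) (auto simp: Dmin_G)
  then show "\<bar>exponent 16 G - 0.52742\<bar> < 0.000005" unfolding e using val_bound by simp
qed

end
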